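(* Let $k\ge 1$ and $n$ be integers, and let $H$ be the $k\times k$ complex matrix whose $i$-th row ($1\le i\le k$) is $v((n+k+i-1)_{k+1})-v((n+k+i-1)_{k})$. Then the nullity of $H$ equals the number of cycles (loops included) in the directed graph $G(n,k)$.
   Context: For an integer $\ell$, $\ell_k$ and $\ell_{k+1}$ denote the least nonnegative residues of $\ell$ modulo $k$ and $k+1$. Let $\xi$ be a complex primitive $(k+1)$-th root of unity and $v(\ell)=(\xi^{\ell},\xi^{2\ell},\dots,\xi^{k\ell})\in\mathbb{C}^k$. $G(n,k)$ is the directed graph on vertices $0,1,\dots,k$ whose edges are exactly the $k$ edges $E(i): (i+n-2)_{k+1}\to(i+n-1)_k$, $1\le i\le k$; equivalently $a\to b$ is an edge iff $v(a)-v(b)$ is a row of $H$. An edge $a\to a$ is a loop and counts as a cycle of length $1$. In the paper the nullity of $H$ equals $N(n,k)$, where for $n>k$, $N(n,k)$ is the nullity of the $n\times n$ skew-symmetric Toeplitz matrix $A(n,k)$ whose first $k$ superdiagonals have all entries $1$ and remaining superdiagonals all entries $0$. *)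

theory Defs
  imports "Jordan_Normal_Form.Matrix_Kernel"
begin

definition res :: "int \<Rightarrow> nat \<Rightarrow> nat" where
  "res l m = nat (l mod int m)"

definition prim_root :: "nat \<Rightarrow> complex \<Rightarrow> bool" where
  "prim_root m \<xi> \<longleftrightarrow> \<xi> ^ m = 1 \<and> (\<forall>j. 0 < j \<and> j < m \<longrightarrow> \<xi> ^ j \<noteq> 1)"

(* the k x k matrix H: row i (0-based, i.e. row i+1 of the paper), column j (0-based) is
   the (j+1)-th coordinate of v((n+k+(i+1)-1)_{k+1}) - v((n+k+(i+1)-1)_k),
   where v(l) = (xi^l, xi^(2l), ..., xi^(kl)) *)
definition Hmat :: "complex \<Rightarrow> int \<Rightarrow> nat \<Rightarrow> complex mat" where
  "Hmat \<xi> n k = mat k k (\<lambda>(i, j).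
      \<xi> ^ ((j + 1) * res (n + int k + int i) (k + 1))
    - \<xi> ^ ((j + 1) * res (n + int k + int i) k))"

definition G_edge :: "int \<Rightarrow> nat \<Rightarrow> nat \<Rightarrow> nat \<Rightarrow> bool" where
  "G_edge n k a b \<longleftrightarrow>
     (\<exists>i::nat. 1 \<le> i \<and> i \<le> k \<and> a = res (int i + n - 2) (k + 1) \<and> b = res (int i + n - 1) k)"

(* a (simple) directed cycle, given as a nonempty list of distinct vertices x_0,...,x_{m-1}
   with edges x_j -> x_{j+1 mod m}; m = 1 is a loop *)
definition is_cycle :: "(nat \<Rightarrow> nat \<Rightarrow> bool) \<Rightarrow> nat set \<Rightarrow> nat list \<Rightarrow> bool" where
  "is_cycle E V xs \<longleftrightarrow> xs \<noteq> [] \<and> distinct xs \<and> set xs \<subseteq> V \<and>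
     (\<forall>j < length xs. E (xs ! j) (xs ! ((j + 1) mod length xs)))"

(* number of cycles: each cycle counted once, normalising the rotation so that the
   list starts at its least vertex *)
definition num_cycles :: "(nat \<Rightarrow> nat \<Rightarrow> bool) \<Rightarrow> nat set \<Rightarrow> nat" where
  "num_cycles E V = card {xs. is_cycle E V xs \<and> hd xs = Min (set xs)}"

end

theory Submission
  imports Defs
begin

lemma (in kernel) dim_by_basis:
  assumes fin: "finite W" and sub: "W \<subseteq> mat_kernel A"
    and indep: "\<And>c. (\<And>j. j < nc \<Longrightarrow> (\<Sum>w\<in>W. c w * w $ j) = 0) \<Longrightarrow> (\<forall>w\<in>W. c w = 0)"
    and spans: "\<And>v. v \<in> mat_kernel A \<Longrightarrow> \<exists>c. \<forall>j<nc. v $ j = (\<Sum>w\<in>W. c w * w $ j)"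
  shows "kernel_dim A = card W"
proof -
  have li: "lin_indpt W"
  proof (rule Ker.finite_lin_indpt2[OF fin sub])
    fix a assume "lincomb a W = 0\<^sub>v nc"
    then have "\<And>j. j < nc \<Longrightarrow> (\<Sum>w\<in>W. a w * w $ j) = 0"
      using lincomb_index[OF _ sub] by (metis index_zero_vec(1))
    then show "\<forall>v\<in>W. a v = 0" using indep by blast
  qed
  have sp: "span W = mat_kernel A"
  proof
    show "span W \<subseteq> mat_kernel A" using sub by (rule Ker.span_is_subset2)
    show "mat_kernel A \<subseteq> span W"
    proof
      fix v assume v: "v \<in> mat_kernel A"
      from spans[OF v] obtain c where c: "\<forall>j<nc. v $ j = (\<Sum>w\<in>W. c w * w $ j)" by blast
      from Ker.lincomb_closed[OF sub] have diml: "dim_vec (lincomb c W) = nc"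
        using mat_kernel_def A by (auto simp: mat_kernel_def)
      have dv: "dim_vec v = nc" using v A by (auto simp: mat_kernel_def)
      have "v = lincomb c W"
        by (rule eq_vecI, insert c diml dv lincomb_index[OF _ sub], auto)
      then show "v \<in> span W" unfolding Ker.span_def using fin by blast
    qed
  qed
  have "basis W" unfolding Ker.basis_def using li sp sub by auto
  then show ?thesis using Ker.dim_basis[OF fin] by simp
qed

locale fgraph =
  fixes E :: "nat \<Rightarrow> nat \<Rightarrow> bool" and g :: "nat \<Rightarrow> nat" and s K :: nat
  assumes E_iff: "E a b \<longleftrightarrow> a \<le> K \<and> a \<noteq> s \<and> b = g a"
    and g_V: "a \<le> K \<Longrightarrow> g a \<le> K"
    and s_V: "s \<le> K"
    and g_s: "g s = s"
begin

definition "CY = {xs. is_cycle E {0..K} xs \<and> hd xs = Min (set xs)}"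
definition "basin xs = {l. l \<le> K \<and> (\<exists>m. (g^^m) l \<in> set xs)}"

lemma gpow_V: "a \<le> K \<Longrightarrow> (g^^m) a \<le> K"
  by (induction m) (auto simp: g_V)

lemma gpow_s: "(g^^m) s = s"
  by (induction m) (auto simp: g_s)

lemma gpow_comm: "(g^^m) (g a) = g ((g^^m) a)"
  by (metis funpow_Suc_right funpow_swap1 o_apply)

lemma cyc_nth:
  assumes c: "is_cycle E {0..K} xs" and j: "j < length xs"
  shows "xs ! j = (g^^j) (hd xs)"
  using j
proof (induction j)
  case 0 then show ?case using c by (simp add: is_cycle_def hd_conv_nth)
next
  case (Suc j)
  have jl: "j < length xs" using Suc.prems by simp
  then have "E (xs ! j) (xs ! ((j+1) mod length xs))" using c unfolding is_cycle_def by blast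
  moreover have "(j+1) mod length xs = Suc j" using Suc.prems by simp
  ultimately show ?case using Suc by (simp add: E_iff)
qed

lemma cyc_closed:
  assumes c: "is_cycle E {0..K} xs" and x: "x \<in> set xs"
  shows "g x \<in> set xs" "x \<noteq> s"
proof -
  obtain j where j: "j < length xs" "xs ! j = x" using x by (auto simp: in_set_conv_nth)
  have "E (xs ! j) (xs ! ((j+1) mod length xs))" using c j unfolding is_cycle_def by auto
  then have "g x = xs ! ((j+1) mod length xs)" "x \<noteq> s" using j by (auto simp: E_iff)
  moreover have "length xs > 0" using j(1) by (metis gr_zeroI less_nat_zero_code)
  then have "(j+1) mod length xs < length xs" by simp
  ultimately show "g x \<in> set xs" "x \<noteq> s" by auto
qed

lemma cyc_closed_pow:
  assumes c: "is_cycle E {0..K} xs" and x: "x \<in> set xs"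
  shows "(g^^m) x \<in> set xs"
  by (induction m) (auto simp: x cyc_closed[OF c])

lemma cyc_period:
  assumes c: "is_cycle E {0..K} xs"
  shows "(g^^(length xs)) (hd xs) = hd xs"
proof -
  from c have ne: "xs \<noteq> []" by (simp add: is_cycle_def)
  define L where "L = length xs"
  have L: "L > 0" using ne by (simp add: L_def)
  have "L - 1 < length xs" using L by (simp add: L_def)
  then have "E (xs ! (L-1)) (xs ! ((L-1+1) mod L))" using c unfolding is_cycle_def L_def by blast
  then have "g (xs ! (L-1)) = xs ! 0" using L by (simp add: E_iff)
  moreover have "xs ! (L-1) = (g^^(L-1)) (hd xs)" using cyc_nth[OF c, of "L-1"] L L_def by simp
  ultimately have "g ((g^^(L-1)) (hd xs)) = hd xs" using ne by (simp add: hd_conv_nth)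
  then show ?thesis using L unfolding L_def
    by (metis Suc_diff_1 funpow.simps(2) o_apply)
qed

lemma cyc_orbit:
  assumes c: "is_cycle E {0..K} xs" and x: "x \<in> set xs"
  shows "set xs = range (\<lambda>m. (g^^m) x)"
proof
  show "range (\<lambda>m. (g^^m) x) \<subseteq> set xs" using cyc_closed_pow[OF c x] by auto
  show "set xs \<subseteq> range (\<lambda>m. (g^^m) x)"
  proof
    fix y assume y: "y \<in> set xs"
    obtain i where i: "i < length xs" "x = (g^^i) (hd xs)"
      using x cyc_nth[OF c] by (metis in_set_conv_nth)
    obtain j where j: "j < length xs" "y = (g^^j) (hd xs)"
      using y cyc_nth[OF c] by (metis in_set_conv_nth)
    have "(g^^(length xs - i)) x = (g^^(length xs - i + i)) (hd xs)"
      unfolding i(2) by (simp only: funpow_add comp_apply)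
    also have "length xs - i + i = length xs" using i by simp
    finally have hx: "(g^^(length xs - i)) x = hd xs" using cyc_period[OF c] by simp
    have "y = (g^^(j + (length xs - i))) x" using j hx by (simp add: funpow_add)
    then show "y \<in> range (\<lambda>m. (g^^m) x)" by blast
  qed
qed

lemma CY_unique:
  assumes xs: "xs \<in> CY" and ys: "ys \<in> CY" and x: "x \<in> set xs" "x \<in> set ys"
  shows "xs = ys"
proof -
  have cx: "is_cycle E {0..K} xs" and hx: "hd xs = Min (set xs)" using xs by (auto simp: CY_def)
  have cy: "is_cycle E {0..K} ys" and hy: "hd ys = Min (set ys)" using ys by (auto simp: CY_def)
  have st: "set xs = set ys" using cyc_orbit[OF cx x(1)] cyc_orbit[OF cy x(2)] by simp
  have h: "hd xs = hd ys" using hx hy st by simp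
  have l: "length xs = length ys" using cx cy st
    by (metis distinct_card is_cycle_def)
  show ?thesis
    by (rule nth_equalityI, use l in simp, simp add: cyc_nth[OF cx] cyc_nth[OF cy] h l)
qed

lemma basin_V: "l \<in> basin xs \<Longrightarrow> l \<le> K" by (simp add: basin_def)

lemma basin_step:
  assumes xs: "xs \<in> CY" and a: "a \<le> K"
  shows "g a \<in> basin xs \<longleftrightarrow> a \<in> basin xs"
proof -
  have cx: "is_cycle E {0..K} xs" using xs by (auto simp: CY_def)
  show ?thesis
  proof
    assume "g a \<in> basin xs"
    then obtain m where "(g^^m) (g a) \<in> set xs" by (auto simp: basin_def)
    then have "(g^^(Suc m)) a \<in> set xs" by (simp add: gpow_comm)
    then show "a \<in> basin xs" using a unfolding basin_def by blast
  next
    assume "a \<in> basin xs"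
    then obtain m where "(g^^m) a \<in> set xs" by (auto simp: basin_def)
    then have "(g^^m) (g a) \<in> set xs" using cyc_closed(1)[OF cx] by (simp add: gpow_comm)
    then show "g a \<in> basin xs" using g_V[OF a] unfolding basin_def by blast
  qed
qed

lemma s_notin_basin: "xs \<in> CY \<Longrightarrow> s \<notin> basin xs"
  using cyc_closed(2) by (auto simp: basin_def gpow_s CY_def)

lemma hd_in_basin: assumes "xs \<in> CY" shows "hd xs \<in> basin xs"
proof -
  have c: "xs \<noteq> []" "set xs \<subseteq> {0..K}" using assms by (auto simp: CY_def is_cycle_def)
  then have h: "hd xs \<in> set xs" by simp
  then have "hd xs \<le> K" using c(2) by (meson atLeastAtMost_iff subsetD)
  moreover have "(g^^0) (hd xs) \<in> set xs" using h by simp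
  ultimately show ?thesis unfolding basin_def by blast
qed

lemma basin_disj:
  assumes xs: "xs \<in> CY" and ys: "ys \<in> CY" and l: "l \<in> basin xs" "l \<in> basin ys"
  shows "xs = ys"
proof -
  have cx: "is_cycle E {0..K} xs" using xs by (auto simp: CY_def)
  have cy: "is_cycle E {0..K} ys" using ys by (auto simp: CY_def)
  obtain m p where m: "(g^^m) l \<in> set xs" and p: "(g^^p) l \<in> set ys" using l by (auto simp: basin_def)
  have "(g^^(p+m)) l \<in> set xs" using cyc_closed_pow[OF cx m, of p] by (simp add: funpow_add)
  moreover have "(g^^(p+m)) l \<in> set ys" using cyc_closed_pow[OF cy p, of m] by (simp add: funpow_add add.commute)
  ultimately show ?thesis using CY_unique[OF xs ys] by blast
qed

lemma CY_finite: "finite CY"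
proof -
  have "CY \<subseteq> {xs. set xs \<subseteq> {0..K} \<and> length xs \<le> Suc K}"
  proof
    fix xs assume "xs \<in> CY"
    then have c: "is_cycle E {0..K} xs" by (simp add: CY_def)
    then have "length xs = card (set xs)" by (simp add: is_cycle_def distinct_card)
    also have "\<dots> \<le> card {0..K}" using c by (intro card_mono) (auto simp: is_cycle_def)
    finally show "xs \<in> {xs. set xs \<subseteq> {0..K} \<and> length xs \<le> Suc K}" using c by (simp add: is_cycle_def)
  qed
  then show ?thesis by (rule finite_subset) (rule finite_lists_length_le, simp)
qed


lemma exists_cycle:
  assumes l: "l \<le> K" and ns: "\<forall>m. (g^^m) l \<noteq> s"
  shows "\<exists>xs\<in>CY. l \<in> basin xs"
proof -
  have "\<not> inj_on (\<lambda>m. (g^^m) l) {0..Suc K}"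
  proof
    assume inj: "inj_on (\<lambda>m. (g^^m) l) {0..Suc K}"
    have "(\<lambda>m. (g^^m) l) ` {0..Suc K} \<subseteq> {0..K}" using gpow_V[OF l] by auto
    then have "card ((\<lambda>m. (g^^m) l) ` {0..Suc K}) \<le> card {0..K}" by (intro card_mono) auto
    then show False using card_image[OF inj] by simp
  qed
  then obtain i j where ij: "i \<le> Suc K" "j \<le> Suc K" "i \<noteq> j" "(g^^i) l = (g^^j) l"
    unfolding inj_on_def by auto
  obtain a b where ab: "a < b" "(g^^a) l = (g^^b) l"
  proof (cases "i < j")
    case True then show ?thesis using that ij by blast
  next
    case False then have "j < i" using ij by simp
    then show ?thesis using that ij by metis
  qed
  define u where "u = (g^^a) l"
  define p where "p = b - a"
  have p: "p > 0" using ab by (simp add: p_def)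
  have pu: "(g^^p) u = u"
  proof -
    have "(g^^p) u = (g^^(p + a)) l" unfolding u_def by (simp add: funpow_add)
    also have "p + a = b" using ab by (simp add: p_def)
    finally show ?thesis using ab(2) u_def by simp
  qed
  define Orb where "Orb = range (\<lambda>m. (g^^m) u)"
  have uV: "u \<le> K" unfolding u_def by (rule gpow_V[OF l])
  have OV: "Orb \<subseteq> {0..K}" unfolding Orb_def using gpow_V[OF uV] by auto
  have finO: "finite Orb" using OV finite_subset by blast
  have neO: "Orb \<noteq> {}" unfolding Orb_def by simp
  define w where "w = Min Orb"
  have wO: "w \<in> Orb" unfolding w_def using finO neO by simp
  then obtain q where q: "w = (g^^q) u" unfolding Orb_def by auto
  have Omin: "\<And>y. y \<in> Orb \<Longrightarrow> w \<le> y" unfolding w_def using finO by simp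
  have wV: "w \<le> K" using wO OV by auto
  have pw: "(g^^p) w = w"
  proof -
    have "(g^^p) w = (g^^(p+q)) u" by (simp add: q funpow_add)
    also have "\<dots> = (g^^(q+p)) u" by (simp add: add.commute)
    also have "\<dots> = (g^^q) ((g^^p) u)" by (simp only: funpow_add comp_apply)
    finally show ?thesis using pu q by simp
  qed
  have ex: "\<exists>p. 0 < p \<and> (g^^p) w = w" using p pw by blast
  define p0 where "p0 = (LEAST p. 0 < p \<and> (g^^p) w = w)"
  have p0: "0 < p0" "(g^^p0) w = w" using LeastI_ex[OF ex] unfolding p0_def by auto
  have p0min: "\<And>r. 0 < r \<Longrightarrow> r < p0 \<Longrightarrow> (g^^r) w \<noteq> w"
    unfolding p0_def using not_less_Least by blast
  have lw: "(g^^(q + a)) l = w" unfolding q u_def by (simp add: funpow_add)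
  have wns: "(g^^j) w \<noteq> s" for j
  proof -
    have "(g^^j) w = (g^^(j + (q + a))) l" by (simp add: lw[symmetric] funpow_add)
    then show ?thesis using ns by simp
  qed
  define xs where "xs = map (\<lambda>j. (g^^j) w) [0..<p0]"
  have len: "length xs = p0" by (simp add: xs_def)
  have nth: "\<And>j. j < p0 \<Longrightarrow> xs ! j = (g^^j) w" by (simp add: xs_def)
  have dist: "distinct xs"
  proof (unfold distinct_conv_nth len, intro allI impI)
    fix x y assume xy: "x < p0" "y < p0" "x \<noteq> y"
    have gen: "(g^^c) w \<noteq> (g^^d) w" if cd: "c < d" "d < p0" for c d
    proof
      assume eq: "(g^^c) w = (g^^d) w"
      have "(g^^(p0 - d + c)) w = (g^^(p0 - d)) ((g^^c) w)" by (simp only: funpow_add comp_apply)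
      also have "\<dots> = (g^^(p0 - d)) ((g^^d) w)" by (simp only: eq)
      also have "\<dots> = (g^^(p0 - d + d)) w" by (simp only: funpow_add comp_apply)
      also have "p0 - d + d = p0" using cd by arith
      also have "(g^^p0) w = w" by (rule p0(2))
      finally have e: "(g^^(p0 - d + c)) w = w" .
      have r1: "0 < p0 - d + c" and r2: "p0 - d + c < p0" using cd by arith+
      show False using p0min[OF r1 r2] e by simp
    qed
    show "xs ! x \<noteq> xs ! y"
    proof (cases "x < y")
      case True then show ?thesis using xy nth gen[of x y] by simp
    next
      case False then have "y < x" using xy by simp
      then show ?thesis using xy nth gen[of y x] by simp
    qed
  qed
  have setO: "set xs \<subseteq> Orb"
  proof
    fix y assume "y \<in> set xs"
    then obtain j where "y = (g^^j) w" by (auto simp: xs_def)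
    then have "y = (g^^(j+q)) u" using q by (simp add: funpow_add)
    then show "y \<in> Orb" unfolding Orb_def by blast
  qed
  have hd: "hd xs = w" using p0 by (simp add: xs_def hd_map)
  have x0: "xs ! 0 = w" using nth[of 0] p0 by simp
  have wx: "w \<in> set xs" using nth_mem[of 0 xs] x0 len p0 by simp
  have cyc: "is_cycle E {0..K} xs"
    unfolding is_cycle_def
  proof (intro conjI allI impI)
    show "xs \<noteq> []" using p0 len by auto
    show "distinct xs" by (rule dist)
    show "set xs \<subseteq> {0..K}" using setO OV by auto
    fix j assume j: "j < length xs"
    have a1: "xs ! j \<le> K" using nth[of j] j len gpow_V[OF wV] by simp
    have a2: "xs ! j \<noteq> s" using nth[of j] j len wns by simp
    have a3: "xs ! ((j + 1) mod length xs) = g (xs ! j)"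
    proof (cases "j + 1 < p0")
      case True then show ?thesis using nth j len by simp
    next
      case False then have "j + 1 = p0" using j len by simp
      then have "(j + 1) mod length xs = 0" using len by simp
      then have "xs ! ((j + 1) mod length xs) = w" using x0 by simp
      also have "\<dots> = (g^^(Suc j)) w" using p0 \<open>j + 1 = p0\<close> by simp
      also have "\<dots> = g (xs ! j)" using nth[of j] j len by simp
      finally show ?thesis .
    qed
    show "E (xs ! j) (xs ! ((j + 1) mod length xs))" using a1 a2 a3 by (simp add: E_iff)
  qed
  have "Min (set xs) = w"
    by (rule Min_eqI) (use setO Omin wx in auto)
  then have "xs \<in> CY" using cyc hd by (simp add: CY_def)
  moreover have "l \<in> basin xs" unfolding basin_def using l lw wx by blast
  ultimately show ?thesis by blast
qed

lemma f_const:
  assumes fc: "\<And>a. a \<le> K \<Longrightarrow> f (g a) = f a" and l: "l \<le> K"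
  shows "f ((g^^m) l) = f l"
  by (induction m) (auto simp: fc gpow_V l)

lemma f_basin:
  assumes fc: "\<And>a. a \<le> K \<Longrightarrow> f (g a) = f a" and xs: "xs \<in> CY" and l: "l \<in> basin xs"
  shows "f l = f (hd xs)"
proof -
  have cx: "is_cycle E {0..K} xs" using xs by (simp add: CY_def)
  obtain m where m: "(g^^m) l \<in> set xs" and lV: "l \<le> K" using l by (auto simp: basin_def)
  obtain j where j: "j < length xs" "(g^^m) l = xs ! j" using m by (metis in_set_conv_nth)
  have hV: "hd xs \<le> K" using hd_in_basin[OF xs] by (simp add: basin_def)
  have "f l = f ((g^^m) l)" using f_const[of f, OF fc lV] by simp
  also have "\<dots> = f ((g^^j) (hd xs))" using j cyc_nth[OF cx] by simp
  also have "\<dots> = f (hd xs)" using f_const[of f, OF fc hV] by simp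
  finally show ?thesis .
qed

lemma f_decomp:
  fixes f :: "nat \<Rightarrow> complex"
  assumes fc: "\<And>a. a \<le> K \<Longrightarrow> f (g a) = f a" and l: "l \<le> K"
  shows "f l = f s + (\<Sum>xs\<in>CY. if l \<in> basin xs then f (hd xs) - f s else 0)"
proof (cases "\<exists>xs\<in>CY. l \<in> basin xs")
  case True
  then obtain xs where xs: "xs \<in> CY" "l \<in> basin xs" by blast
  have "(\<Sum>ys\<in>CY. if l \<in> basin ys then f (hd ys) - f s else 0) = f (hd xs) - f s"
  proof -
    have "(\<Sum>ys\<in>CY. if l \<in> basin ys then f (hd ys) - f s else 0)
      = (if l \<in> basin xs then f (hd xs) - f s else 0) + (\<Sum>ys\<in>CY-{xs}. if l \<in> basin ys then f (hd ys) - f s else 0)"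
      by (rule sum.remove[OF CY_finite xs(1)])
    also have "(\<Sum>ys\<in>CY-{xs}. if l \<in> basin ys then f (hd ys) - f s else 0) = 0"
      by (rule sum.neutral) (use basin_disj[OF xs(1) _ xs(2)] in auto)
    finally show ?thesis using xs by simp
  qed
  then show ?thesis using f_basin[of f, OF fc xs] by simp
next
  case False
  then have "\<exists>m. (g^^m) l = s" using exists_cycle[OF l] by blast
  then obtain m where "(g^^m) l = s" by blast
  then have "f l = f s" using f_const[of f, OF fc l, of m] by simp
  then show ?thesis using False by simp
qed

end

lemma res_lt: "m > 0 \<Longrightarrow> res x m < m"
  unfolding res_def by (simp add: nat_less_iff)

lemma res_int: "m > 0 \<Longrightarrow> int (res x m) = x mod int m"
  unfolding res_def by simp


lemma res_shift: "res (x + int m) m = res x m"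
  unfolding res_def by simp

definition "sG n k = res (n - 2) (k+1)"
definition "gG n k a = (if a = sG n k then sG n k else res (int (res (int a - n + 2) (k+1)) + n - 1) k)"

lemma G_edge_iff:
  assumes k: "k \<ge> 1"
  shows "G_edge n k a b \<longleftrightarrow> a \<le> k \<and> a \<noteq> sG n k \<and> b = gG n k a"
proof
  assume "G_edge n k a b"
  then obtain i :: nat where i: "1 \<le> i" "i \<le> k" "a = res (int i + n - 2) (k + 1)" "b = res (int i + n - 1) k"
    unfolding G_edge_def by blast
  have ak: "a \<le> k" using res_lt[of "k+1" "int i + n - 2"] i(3) by simp
  have ai: "int a = (int i + n - 2) mod int (k+1)" using i(3) res_int[of "k+1"] by simp
  have ri: "res (int a - n + 2) (k+1) = i"
  proof -
    have "(int a - n + 2) mod int (k+1) = ((int i + n - 2) mod int (k+1) + (2 - n)) mod int (k+1)"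
      unfolding ai by (simp add: algebra_simps)
    also have "\<dots> = (int i + n - 2 + (2 - n)) mod int (k+1)" by (rule mod_add_left_eq)
    also have "\<dots> = int i" using i by simp
    finally show ?thesis unfolding res_def by simp
  qed
  have ans: "a \<noteq> sG n k"
  proof
    assume "a = sG n k"
    then have "int a = (n - 2) mod int (k+1)" unfolding sG_def using res_int[of "k+1"] by simp
    then have "(int a - n + 2) mod int (k+1) = ((n - 2) mod int (k+1) + (2 - n)) mod int (k+1)"
      by (simp add: algebra_simps)
    also have "\<dots> = (n - 2 + (2 - n)) mod int (k+1)" by (rule mod_add_left_eq)
    finally have "(int a - n + 2) mod int (k+1) = 0" by simp
    then have "res (int a - n + 2) (k+1) = 0" unfolding res_def by simp
    then show False using ri i by simp
  qed
  show "a \<le> k \<and> a \<noteq> sG n k \<and> b = gG n k a"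
    using ak ans ri i(4) unfolding gG_def by simp
next
  assume a: "a \<le> k \<and> a \<noteq> sG n k \<and> b = gG n k a"
  define i where "i = res (int a - n + 2) (k+1)"
  have ik: "i \<le> k" using res_lt[of "k+1" "int a - n + 2"] unfolding i_def by simp
  have ii: "int i = (int a - n + 2) mod int (k+1)" unfolding i_def using res_int[of "k+1"] by simp
  have ra: "res (int i + n - 2) (k + 1) = a"
  proof -
    have "(int i + n - 2) mod int (k+1) = ((int a - n + 2) mod int (k+1) + (n - 2)) mod int (k+1)"
      unfolding ii by (simp add: algebra_simps)
    also have "\<dots> = (int a - n + 2 + (n - 2)) mod int (k+1)" by (rule mod_add_left_eq)
    also have "\<dots> = int a" using a by simp
    finally show ?thesis unfolding res_def by simp
  qed
  have i1: "1 \<le> i"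
  proof (rule ccontr)
    assume "\<not> 1 \<le> i"
    then have "i = 0" by simp
    then have "(int a - n + 2) mod int (k+1) = 0" using ii by simp
    then have "((int a - n + 2) mod int (k+1) + (n - 2)) mod int (k+1) = (n - 2) mod int (k+1)" by simp
    then have "(int a - n + 2 + (n - 2)) mod int (k+1) = (n - 2) mod int (k+1)" by (simp add: mod_add_left_eq)
    then have "int a = (n - 2) mod int (k+1)" using a by simp
    then have "a = sG n k" unfolding sG_def res_def by simp
    then show False using a by simp
  qed
  have "b = res (int i + n - 1) k" using a unfolding gG_def i_def by simp
  then show "G_edge n k a b" unfolding G_edge_def using i1 ik ra by metis
qed

lemma row_edge:
  assumes "i < k"
  shows "G_edge n k (res (n + int k + int i) (k+1)) (res (n + int k + int i) k)"
proof -
  have "res (n + int k + int i) (k+1) = res (int (i+1) + n - 2) (k+1)"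
    using res_shift[of "int (i+1) + n - 2" "k+1"] by (simp add: algebra_simps)
  moreover have "res (n + int k + int i) k = res (int (i+1) + n - 1) k"
    using res_shift[of "int (i+1) + n - 1" "k"] by (simp add: algebra_simps)
  ultimately show ?thesis unfolding G_edge_def using assms
    by (intro exI[of _ "i+1"]) simp
qed

lemma edge_row:
  assumes "G_edge n k a b"
  shows "\<exists>i<k. a = res (n + int k + int i) (k+1) \<and> b = res (n + int k + int i) k"
proof -
  obtain i :: nat where i: "1 \<le> i" "i \<le> k" "a = res (int i + n - 2) (k + 1)" "b = res (int i + n - 1) k"
    using assms unfolding G_edge_def by blast
  have "res (n + int k + int (i-1)) (k+1) = res (int i + n - 2) (k+1)"
    using res_shift[of "int i + n - 2" "k+1"] i(1) by (simp add: algebra_simps of_nat_diff)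
  moreover have "res (n + int k + int (i-1)) k = res (int i + n - 1) k"
    using res_shift[of "int i + n - 1" "k"] i(1) by (simp add: algebra_simps of_nat_diff)
  ultimately show ?thesis using i by (intro exI[of _ "i-1"]) simp
qed

lemma gG_V: "k \<ge> 1 \<Longrightarrow> a \<le> k \<Longrightarrow> gG n k a \<le> k"
  unfolding gG_def sG_def using res_lt[of "k+1"] res_lt[of k] by (simp add: less_Suc_eq_le less_imp_le_nat)

lemma sG_V: "sG n k \<le> k"
  unfolding sG_def using res_lt[of "k+1"] by (simp add: less_Suc_eq_le)

lemma geo_root:
  fixes z :: complex
  assumes "z ^ (k+1) = 1"
  shows "(\<Sum>i<k+1. z ^ i) = (if z = 1 then of_nat (k+1) else 0)"
proof -
  have e: "(\<Sum>i<k+1. z^i) = (if z = 1 then of_nat (k+1) else (1 - z^(k+1))/(1-z))"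
    by (rule sum_gp_strict)
  show ?thesis using e[unfolded assms] by simp
qed

lemma geo_root_shift:
  fixes z :: complex
  assumes "z ^ (k+1) = 1"
  shows "(\<Sum>j\<in>{0..<k}. z ^ (j+1)) = (if z = 1 then of_nat k else -1)"
proof -
  have "(\<Sum>i<Suc k. z ^ i) = z ^ 0 + (\<Sum>j<k. z ^ Suc j)" by (rule sum.lessThan_Suc_shift)
  then have "(\<Sum>j<k. z ^ Suc j) = (\<Sum>i<k+1. z ^ i) - 1" by simp
  also have "\<dots> = (if z = 1 then of_nat k else -1)" unfolding geo_root[OF assms] by simp
  finally have "(\<Sum>j<k. z ^ Suc j) = (if z = 1 then of_nat k else -1)" .
  moreover have "{0..<k} = {..<k}" by auto
  ultimately show ?thesis by simp
qed

locale proot =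
  fixes k :: nat and \<xi> :: complex
  assumes k: "k \<ge> 1" and pr: "prim_root (k + 1) \<xi>"
begin

definition "\<zeta> = inverse \<xi>"

lemma xi_pow: "\<xi> ^ (k+1) = 1" using pr by (simp add: prim_root_def)
lemma xi_nz: "\<xi> \<noteq> 0" using xi_pow by (metis add_is_0 one_neq_zero power_0_left zero_neq_one)
lemma zeta_pow: "\<zeta> ^ (k+1) = 1" by (simp only: \<zeta>_def power_inverse xi_pow inverse_1)

lemma xi_inj:
  assumes a: "a \<le> k" and b: "b \<le> k" and e: "\<xi> ^ a = \<xi> ^ b"
  shows "a = b"
proof (rule ccontr)
  assume ne: "a \<noteq> b"
  have gen: "False" if cd: "c < d" "d \<le> k" "\<xi> ^ c = \<xi> ^ d" for c d
  proof -
    have "\<xi> ^ d = \<xi> ^ (c + (d - c))" using cd by simp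
    also have "\<dots> = \<xi> ^ c * \<xi> ^ (d - c)" by (rule power_add)
    finally have "\<xi> ^ d = \<xi> ^ c * \<xi> ^ (d - c)" .
    then have "\<xi> ^ (d - c) = 1" using cd xi_nz by simp
    moreover have "0 < d - c" "d - c < k + 1" using cd by auto
    ultimately show False using pr unfolding prim_root_def by blast
  qed
  show False
  proof (cases "a < b")
    case True then show ?thesis using gen[of a b] b e by simp
  next
    case False then have "b < a" using ne by simp
    then show ?thesis using gen[of b a] a e by simp
  qed
qed

lemma pow_zeta_xi: "\<xi> ^ a * \<zeta> ^ b = 1 \<longleftrightarrow> \<xi> ^ a = \<xi> ^ b"
  using xi_nz by (simp add: \<zeta>_def power_inverse field_simps)

lemma orth1:
  assumes l: "l \<le> k" and m: "m \<le> k"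
  shows "(\<Sum>j\<in>{0..<k}. \<xi> ^ ((j+1)*l) * \<zeta> ^ ((j+1)*m)) = (if l = m then of_nat k else -1)"
proof -
  define z where "z = \<xi> ^ l * \<zeta> ^ m"
  have t: "\<xi> ^ ((j+1)*l) * \<zeta> ^ ((j+1)*m) = z ^ (j+1)" for j
  proof -
    have "\<xi> ^ ((j+1)*l) = (\<xi>^l)^(j+1)" by (metis mult.commute power_mult)
    moreover have "\<zeta> ^ ((j+1)*m) = (\<zeta>^m)^(j+1)" by (metis mult.commute power_mult)
    ultimately show ?thesis unfolding z_def by (simp only: power_mult_distrib)
  qed
  have zp: "z ^ (k+1) = 1"
  proof -
    have "(\<xi>^l)^(k+1) = (\<xi>^(k+1))^l" by (metis mult.commute power_mult)
    moreover have "(\<zeta>^m)^(k+1) = (\<zeta>^(k+1))^m" by (metis mult.commute power_mult)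
    ultimately show ?thesis unfolding z_def power_mult_distrib xi_pow zeta_pow by simp
  qed
  have "z = 1 \<longleftrightarrow> l = m" unfolding z_def pow_zeta_xi using xi_inj[OF l m] by auto
  then show ?thesis unfolding t using geo_root_shift[OF zp] by simp
qed

lemma orth2:
  assumes j: "j < k" and j': "j' < k"
  shows "(\<Sum>l\<in>{0..k}. \<xi> ^ ((j'+1)*l) * \<zeta> ^ ((j+1)*l)) = (if j = j' then of_nat (k+1) else 0)"
proof -
  define z where "z = \<xi> ^ (j'+1) * \<zeta> ^ (j+1)"
  have t: "\<xi> ^ ((j'+1)*l) * \<zeta> ^ ((j+1)*l) = z ^ l" for l
    unfolding z_def by (simp only: power_mult_distrib power_mult)
  have zp: "z ^ (k+1) = 1"
  proof -
    have "(\<xi>^(j'+1))^(k+1) = (\<xi>^(k+1))^(j'+1)" by (metis mult.commute power_mult)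
    moreover have "(\<zeta>^(j+1))^(k+1) = (\<zeta>^(k+1))^(j+1)" by (metis mult.commute power_mult)
    ultimately show ?thesis unfolding z_def power_mult_distrib xi_pow zeta_pow by simp
  qed
  have "z = 1 \<longleftrightarrow> j = j'" unfolding z_def pow_zeta_xi using xi_inj[of "j'+1" "j+1"] j j' by auto
  moreover have "{0..k} = {..<k+1}" by auto
  ultimately show ?thesis unfolding t using geo_root[OF zp] by simp
qed

lemma orth3:
  assumes j: "j < k"
  shows "(\<Sum>l\<in>{0..k}. \<zeta> ^ ((j+1)*l)) = 0"
proof -
  define z where "z = \<zeta> ^ (j+1)"
  have t: "\<zeta> ^ ((j+1)*l) = z ^ l" for l unfolding z_def by (simp only: power_mult)
  have zp: "z ^ (k+1) = 1"
  proof -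
    have "(\<zeta>^(j+1))^(k+1) = (\<zeta>^(k+1))^(j+1)" by (metis mult.commute power_mult)
    then show ?thesis unfolding z_def zeta_pow by simp
  qed
  have "z \<noteq> 1"
  proof
    assume "z = 1"
    then have "inverse (\<xi> ^ (j+1)) = 1" unfolding z_def \<zeta>_def by (simp only: power_inverse)
    then have "\<xi> ^ (j+1) = 1" by (metis inverse_1 inverse_inverse_eq)
    then show False using pr j unfolding prim_root_def by auto
  qed
  moreover have "{0..k} = {..<k+1}" by auto
  ultimately show ?thesis unfolding t using geo_root[OF zp] by simp
qed

end

context proot begin

definition "Fv u l = (\<Sum>j\<in>{0..<k}. u $ j * \<xi> ^ ((j+1)*l))"

lemma H_carrier: "Hmat \<xi> n k \<in> carrier_mat k k" by (simp add: Hmat_def)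

lemma H_mult:
  assumes u: "u \<in> carrier_vec k" and i: "i < k"
  shows "(Hmat \<xi> n k *\<^sub>v u) $ i = Fv u (res (n + int k + int i) (k+1)) - Fv u (res (n + int k + int i) k)"
proof -
  have "(Hmat \<xi> n k *\<^sub>v u) $ i = (\<Sum>j\<in>{0..<k}. row (Hmat \<xi> n k) i $ j * u $ j)"
    using u i by (simp add: Hmat_def scalar_prod_def)
  also have "\<dots> = (\<Sum>j\<in>{0..<k}. (\<xi> ^ ((j+1) * res (n + int k + int i) (k+1))
        - \<xi> ^ ((j+1) * res (n + int k + int i) k)) * u $ j)"
    using i by (intro sum.cong) (auto simp: Hmat_def)
  also have "\<dots> = Fv u (res (n + int k + int i) (k+1)) - Fv u (res (n + int k + int i) k)"
    unfolding Fv_def by (simp add: sum_subtractf algebra_simps)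
  finally show ?thesis .
qed

lemma inv_dft:
  assumes u: "u \<in> carrier_vec k" and j: "j < k"
  shows "(\<Sum>l\<in>{0..k}. Fv u l * \<zeta> ^ ((j+1)*l)) = of_nat (k+1) * u $ j"
proof -
  have "(\<Sum>l\<in>{0..k}. Fv u l * \<zeta> ^ ((j+1)*l))
      = (\<Sum>l\<in>{0..k}. \<Sum>j'\<in>{0..<k}. u $ j' * (\<xi> ^ ((j'+1)*l) * \<zeta> ^ ((j+1)*l)))"
    unfolding Fv_def by (simp add: sum_distrib_right mult.assoc)
  also have "\<dots> = (\<Sum>j'\<in>{0..<k}. u $ j' * (\<Sum>l\<in>{0..k}. \<xi> ^ ((j'+1)*l) * \<zeta> ^ ((j+1)*l)))"
    by (subst sum.swap) (simp add: sum_distrib_left)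
  also have "\<dots> = (\<Sum>j'\<in>{0..<k}. u $ j' * (if j = j' then of_nat (k+1) else 0))"
    by (intro sum.cong refl, subst orth2[OF j]) auto
  also have "\<dots> = (\<Sum>j'\<in>{0..<k}. if j = j' then u $ j' * of_nat (k+1) else 0)"
    by (intro sum.cong) auto
  also have "\<dots> = of_nat (k+1) * u $ j" using j by (simp add: sum.delta)
  finally show ?thesis .
qed

end

lemma main_lemma:
  fixes k :: nat and n :: int and \<xi> :: complex
  assumes k: "k \<ge> 1" and pr: "prim_root (k + 1) \<xi>"
  shows "kernel_dim (Hmat \<xi> n k) = num_cycles (G_edge n k) {0..k}"
proof -
  interpret proot k \<xi> by unfold_locales (use k pr in auto)
  interpret fg: fgraph "G_edge n k" "gG n k" "sG n k" k
  proof (unfold_locales)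
    fix a b show "G_edge n k a b \<longleftrightarrow> a \<le> k \<and> a \<noteq> sG n k \<and> b = gG n k a" by (rule G_edge_iff[OF k])
  next
    fix a :: nat assume "a \<le> k" then show "gG n k a \<le> k" by (rule gG_V[OF k])
  next
    show "sG n k \<le> k" by (rule sG_V)
  next
    show "gG n k (sG n k) = sG n k" by (simp add: gG_def)
  qed
  have k1: "(of_nat (Suc k)::complex) \<noteq> 0" by (rule of_nat_neq_0)
  then have k1': "1 + of_nat k \<noteq> (0::complex)" "of_nat (k+1) \<noteq> (0::complex)" by simp_all
  define H where "H = Hmat \<xi> n k"
  have Hc: "H \<in> carrier_mat k k" unfolding H_def by (rule H_carrier)
  interpret kernel k k H by unfold_locales (rule Hc)
  define B where "B = fg.basin"
  have BV: "\<And>xs. B xs \<subseteq> {0..k}" unfolding B_def using fg.basin_V by auto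
  have Bfin: "\<And>xs. finite (B xs)" using BV finite_subset by blast
  define wv where "wv xs = vec k (\<lambda>j. \<Sum>m\<in>B xs. \<zeta> ^ ((j+1)*m))" for xs
  have wvc: "wv xs \<in> carrier_vec k" for xs unfolding wv_def by simp
  have Fw: "Fv (wv xs) l = (if l \<in> B xs then of_nat (k+1) else 0) - of_nat (card (B xs))"
    if l: "l \<le> k" for xs l
  proof -
    have "Fv (wv xs) l = (\<Sum>j\<in>{0..<k}. \<Sum>m\<in>B xs. \<xi> ^ ((j+1)*l) * \<zeta> ^ ((j+1)*m))"
      unfolding Fv_def wv_def by (intro sum.cong refl) (simp add: sum_distrib_left mult.commute)
    also have "\<dots> = (\<Sum>m\<in>B xs. \<Sum>j\<in>{0..<k}. \<xi> ^ ((j+1)*l) * \<zeta> ^ ((j+1)*m))"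
      by (rule sum.swap)
    also have "\<dots> = (\<Sum>m\<in>B xs. (if l = m then of_nat (k+1) else 0) - 1)"
    proof (intro sum.cong refl)
      fix m assume "m \<in> B xs"
      then have m: "m \<le> k" using BV[of xs] atLeastAtMost_iff by blast
      show "(\<Sum>j\<in>{0..<k}. \<xi> ^ ((j+1)*l) * \<zeta> ^ ((j+1)*m)) = (if l = m then of_nat (k+1) else 0) - 1"
        unfolding orth1[OF l m] by simp
    qed
    also have "\<dots> = (if l \<in> B xs then of_nat (k+1) else 0) - of_nat (card (B xs))"
      by (simp add: sum_subtractf sum.delta Bfin)
    finally show ?thesis .
  qed
  have sB: "\<And>xs. xs \<in> fg.CY \<Longrightarrow> sG n k \<notin> B xs" unfolding B_def by (rule fg.s_notin_basin)
  have hB: "\<And>xs. xs \<in> fg.CY \<Longrightarrow> hd xs \<in> B xs" unfolding B_def by (rule fg.hd_in_basin)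
  have dB: "\<And>xs ys l. xs \<in> fg.CY \<Longrightarrow> ys \<in> fg.CY \<Longrightarrow> l \<in> B xs \<Longrightarrow> l \<in> B ys \<Longrightarrow> xs = ys"
    unfolding B_def by (rule fg.basin_disj)
  have hV: "\<And>xs. xs \<in> fg.CY \<Longrightarrow> hd xs \<le> k" using hB BV atLeastAtMost_iff by blast
  have sV: "sG n k \<le> k" by (rule sG_V)
  have wker: "wv xs \<in> mat_kernel H" if xs: "xs \<in> fg.CY" for xs
  proof (rule mat_kernelI[OF Hc wvc])
    show "H *\<^sub>v wv xs = 0\<^sub>v k"
    proof (rule eq_vecI)
      fix i assume "i < dim_vec (0\<^sub>v k :: complex vec)"
      then have i: "i < k" by simp
      define a where "a = res (n + int k + int i) (k+1)"
      define b where "b = res (n + int k + int i) k"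
      have e: "G_edge n k a b" unfolding a_def b_def by (rule row_edge[OF i])
      then have a: "a \<le> k" "b = gG n k a" using G_edge_iff[OF k] by auto
      have bk: "b \<le> k" using a gG_V[OF k] by simp
      have "a \<in> B xs \<longleftrightarrow> b \<in> B xs" unfolding B_def a(2) using fg.basin_step[OF xs a(1)] by simp
      then have "Fv (wv xs) a = Fv (wv xs) b" using Fw a(1) bk by simp
      then show "(H *\<^sub>v wv xs) $ i = 0\<^sub>v k $ i"
        using H_mult[OF wvc i, of n xs] i unfolding H_def a_def b_def by simp
    qed (use Hc in auto)
  qed
  have inj: "inj_on wv fg.CY"
  proof (rule inj_onI)
    fix xs ys assume xs: "xs \<in> fg.CY" and ys: "ys \<in> fg.CY" and e: "wv xs = wv ys"
    have c: "card (B xs) = card (B ys)"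
      using arg_cong[OF e, of "\<lambda>u. Fv u (sG n k)"] Fw[OF sV] sB[OF xs] sB[OF ys] by simp
    have "hd xs \<in> B ys"
    proof (rule ccontr)
      assume "hd xs \<notin> B ys"
      then show False
        using arg_cong[OF e, of "\<lambda>u. Fv u (hd xs)"] Fw[OF hV[OF xs]] hB[OF xs] c k1' by simp
    qed
    then show "xs = ys" using dB[OF xs ys hB[OF xs]] by simp
  qed
  define W where "W = wv ` fg.CY"
  have cardW: "card W = card fg.CY" unfolding W_def by (rule card_image[OF inj])
  have "kernel_dim H = card W"
  proof (rule dim_by_basis)
    show "finite W" unfolding W_def using fg.CY_finite by simp
    show "W \<subseteq> mat_kernel H" unfolding W_def using wker by auto
  next
    fix c :: "complex vec \<Rightarrow> complex"
    assume c0: "\<And>j. j < k \<Longrightarrow> (\<Sum>w\<in>W. c w * w $ j) = 0"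
    have T: "(\<Sum>xs\<in>fg.CY. c (wv xs) * ((if l \<in> B xs then of_nat (k+1) else 0) - of_nat (card (B xs)))) = 0"
      if l: "l \<le> k" for l
    proof -
      have "(\<Sum>xs\<in>fg.CY. c (wv xs) * ((if l \<in> B xs then of_nat (k+1) else 0) - of_nat (card (B xs))))
          = (\<Sum>xs\<in>fg.CY. c (wv xs) * Fv (wv xs) l)" using Fw[OF l] by simp
      also have "\<dots> = (\<Sum>xs\<in>fg.CY. \<Sum>j\<in>{0..<k}. c (wv xs) * (wv xs $ j) * \<xi> ^ ((j+1)*l))"
        unfolding Fv_def by (simp add: sum_distrib_left mult.assoc)
      also have "\<dots> = (\<Sum>j\<in>{0..<k}. (\<Sum>xs\<in>fg.CY. c (wv xs) * (wv xs $ j)) * \<xi> ^ ((j+1)*l))"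
        by (subst sum.swap) (simp add: sum_distrib_right)
      also have "\<dots> = (\<Sum>j\<in>{0..<k}. (\<Sum>w\<in>W. c w * w $ j) * \<xi> ^ ((j+1)*l))"
        unfolding W_def by (simp add: sum.reindex[OF inj])
      also have "\<dots> = 0" using c0 by simp
      finally show ?thesis .
    qed
    have S: "(\<Sum>xs\<in>fg.CY. c (wv xs) * of_nat (card (B xs))) = 0"
      using T[OF sV] sB by (simp add: sum_negf)
    show "\<forall>w\<in>W. c w = 0"
    proof
      fix w assume "w \<in> W"
      then obtain ys where ys: "ys \<in> fg.CY" and w: "w = wv ys" unfolding W_def by blast
      have "(\<Sum>xs\<in>fg.CY. c (wv xs) * (if hd ys \<in> B xs then of_nat (k+1) else 0))
          = c (wv ys) * of_nat (k+1)"
      proof -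
        have "(\<Sum>xs\<in>fg.CY. c (wv xs) * (if hd ys \<in> B xs then of_nat (k+1) else 0))
            = c (wv ys) * (if hd ys \<in> B ys then of_nat (k+1) else 0)
              + (\<Sum>xs\<in>fg.CY - {ys}. c (wv xs) * (if hd ys \<in> B xs then of_nat (k+1) else 0))"
          by (rule sum.remove[OF fg.CY_finite ys])
        also have "(\<Sum>xs\<in>fg.CY - {ys}. c (wv xs) * (if hd ys \<in> B xs then of_nat (k+1) else 0)) = 0"
          by (rule sum.neutral) (use dB[OF _ ys _ hB[OF ys]] in fastforce)
        finally show ?thesis using hB[OF ys] by simp
      qed
      moreover have "(\<Sum>xs\<in>fg.CY. c (wv xs) * (if hd ys \<in> B xs then of_nat (k+1) else 0))
          - (\<Sum>xs\<in>fg.CY. c (wv xs) * of_nat (card (B xs))) = 0"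
        using T[OF hV[OF ys]] by (simp add: sum_subtractf right_diff_distrib)
      ultimately have "c (wv ys) * of_nat (k+1) = 0" using S by simp
      then show "c w = 0" using w k1' by simp
    qed
  next
    fix v assume v: "v \<in> mat_kernel H"
    have vc: "v \<in> carrier_vec k" and Hv: "H *\<^sub>v v = 0\<^sub>v k" using mat_kernelD[OF Hc v] by auto
    define f where "f = Fv v"
    have fc: "f (gG n k a) = f a" if a: "a \<le> k" for a
    proof (cases "a = sG n k")
      case True then show ?thesis by (simp add: gG_def)
    next
      case False
      then have "G_edge n k a (gG n k a)" using G_edge_iff[OF k] a by simp
      then obtain i where i: "i < k" "a = res (n + int k + int i) (k+1)" "gG n k a = res (n + int k + int i) k"
        using edge_row by blast
      have "(H *\<^sub>v v) $ i = 0" using Hv i by simp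
      then show ?thesis using H_mult[OF vc i(1), of n] i unfolding H_def f_def by simp
    qed
    define cc where "cc xs = (f (hd xs) - f (sG n k)) / of_nat (k+1)" for xs
    define c where "c w = cc (the_inv_into fg.CY wv w)" for w
    show "\<exists>c. \<forall>j<k. v $ j = (\<Sum>w\<in>W. c w * w $ j)"
    proof (intro exI allI impI)
      fix j assume j: "j < k"
      have "of_nat (k+1) * v $ j = (\<Sum>l\<in>{0..k}. f l * \<zeta> ^ ((j+1)*l))"
        unfolding f_def using inv_dft[OF vc j] by simp
      also have "\<dots> = (\<Sum>l\<in>{0..k}. (f (sG n k) + (\<Sum>xs\<in>fg.CY. if l \<in> B xs then f (hd xs) - f (sG n k) else 0)) * \<zeta> ^ ((j+1)*l))"
        unfolding B_def using fg.f_decomp[of f, OF fc] by (intro sum.cong) auto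
      also have "\<dots> = f (sG n k) * (\<Sum>l\<in>{0..k}. \<zeta> ^ ((j+1)*l))
          + (\<Sum>xs\<in>fg.CY. \<Sum>l\<in>{0..k}. if l \<in> B xs then (f (hd xs) - f (sG n k)) * \<zeta> ^ ((j+1)*l) else 0)"
      proof -
        have st: "(f (sG n k) + (\<Sum>xs\<in>fg.CY. if l \<in> B xs then f (hd xs) - f (sG n k) else 0)) * \<zeta> ^ ((j+1)*l)
          = f (sG n k) * \<zeta> ^ ((j+1)*l) + (\<Sum>xs\<in>fg.CY. if l \<in> B xs then (f (hd xs) - f (sG n k)) * \<zeta> ^ ((j+1)*l) else 0)"
          for l by (auto simp: distrib_right sum_distrib_right intro!: sum.cong)
        show ?thesis unfolding st sum.distrib sum_distrib_left[symmetric]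
          by (subst sum.swap) simp
      qed
      also have "(\<Sum>l\<in>{0..k}. \<zeta> ^ ((j+1)*l)) = 0" by (rule orth3[OF j])
      also have "(\<Sum>xs\<in>fg.CY. \<Sum>l\<in>{0..k}. if l \<in> B xs then (f (hd xs) - f (sG n k)) * \<zeta> ^ ((j+1)*l) else 0)
          = (\<Sum>xs\<in>fg.CY. (f (hd xs) - f (sG n k)) * wv xs $ j)"
      proof (rule sum.cong[OF refl])
        fix xs
        have "(\<Sum>l\<in>{0..k}. if l \<in> B xs then (f (hd xs) - f (sG n k)) * \<zeta> ^ ((j+1)*l) else 0)
            = (\<Sum>l\<in>{l\<in>{0..k}. l \<in> B xs}. (f (hd xs) - f (sG n k)) * \<zeta> ^ ((j+1)*l))"
          by (rule sum.inter_filter[symmetric]) simp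
        also have "{l\<in>{0..k}. l \<in> B xs} = B xs" using BV[of xs] by blast
        finally show "(\<Sum>l\<in>{0..k}. if l \<in> B xs then (f (hd xs) - f (sG n k)) * \<zeta> ^ ((j+1)*l) else 0)
            = (f (hd xs) - f (sG n k)) * wv xs $ j"
          using j unfolding wv_def by (simp add: sum_distrib_left)
      qed
      finally have eq: "of_nat (k+1) * v $ j = (\<Sum>xs\<in>fg.CY. (f (hd xs) - f (sG n k)) * wv xs $ j)" by simp
      have "v $ j = (of_nat (k+1) * v $ j) / of_nat (k+1)" using k1'(2) by (rule nonzero_mult_div_cancel_left[symmetric])
      also have "\<dots> = (\<Sum>xs\<in>fg.CY. (f (hd xs) - f (sG n k)) * wv xs $ j) / of_nat (k+1)" unfolding eq ..
      also have "\<dots> = (\<Sum>xs\<in>fg.CY. cc xs * wv xs $ j)"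
        unfolding cc_def sum_divide_distrib by (intro sum.cong refl) simp
      also have "\<dots> = (\<Sum>xs\<in>fg.CY. c (wv xs) * wv xs $ j)"
        unfolding c_def using the_inv_into_f_f[OF inj] by simp
      also have "\<dots> = (\<Sum>w\<in>W. c w * w $ j)"
        unfolding W_def by (simp add: sum.reindex[OF inj])
      finally show "v $ j = (\<Sum>w\<in>W. c w * w $ j)" .
    qed
  qed
  then show ?thesis unfolding H_def num_cycles_def cardW fg.CY_def by simp
qed

theorem theorem2p1:
  fixes k :: nat and n :: int and \<xi> :: complex
  assumes "k \<ge> 1" and "prim_root (k + 1) \<xi>"
  shows "kernel_dim (Hmat \<xi> n k) = num_cycles (G_edge n k) {0..k}"
  using main_lemma[OF assms] .

end
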